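(* For $n\geq 1$, there is a bijection $\pi\mapsto T(\pi)$ from $\mathfrak{S}_n(2413,3142)$ to $\mathfrak{D}\mathfrak{T}_n$ such that for each $i\in[n-1]$, $$\pi_i>\pi_{i+1}\quad\Longleftrightarrow\quad\text{the $i$th node of $T(\pi)$ (in in-order) is labelled } \ominus.$$ Moreover, for $0\leq k \leq \lfloor (n-1)/2 \rfloor$, this map restricts to a bijection between $$\mathfrak{S}_{n,k}^S:= \{\pi \in \mathfrak{S}_n(3142, 2413) : \mathrm{dd}(\pi)=0,\ \mathrm{des}(\pi)=k\}$$ and $$\mathfrak{D}\mathfrak{T}_{n,k}^{2} :=\{T\in\mathfrak{D}\mathfrak{T}_n :\ T \text{ has no two consecutive nodes (in in-order) both labelled } \ominus,\ \text{its first node is labelled }\oplus,\ n_\ominus(T)=k \}.$$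
   Context: $\mathfrak{S}_n(2413,3142)$ is the set of permutations $\pi=\pi_1\cdots\pi_n$ of $[n]$ avoiding the patterns $2413$ and $3142$ (no subsequence has the same relative order as $2413$ or $3142$). With $\pi_0=\pi_{n+1}=+\infty$, $\mathrm{des}(\pi)$ is the number of $i\in[n]$ with $\pi_i>\pi_{i+1}$ and $\mathrm{dd}(\pi)$ is the number of $i\in[n]$ with $\pi_{i-1}>\pi_i>\pi_{i+1}$. A binary tree is either empty or consists of a root together with a left subtree and a right subtree, both binary trees; the root of the left (right) subtree is the left (right) child. Nodes are ordered by in-order: recursively, the left subtree, then the root, then the right subtree. A right chain of a binary tree is a maximal sequence of nodes $v_1,\dots,v_l$ in which $v_1$ is either the root or a left child and each $v_{j+1}$ is the right child of $v_j$; $l$ is its length. A di-sk tree is a binary tree whose nodes are labelled by $\oplus$ or $\ominus$ such that along every right chain the labels alternate. $\mathfrak{D}\mathfrak{T}_n$ is the set of di-sk trees with $n-1$ nodes (for $n=1$ only the empty tree), and $n_\ominus(T)$ is the number of nodes of $T$ labelled $\ominus$. *)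

theory Defs
  imports Main "HOL-Library.Tree" "HOL-Library.Extended_Nat"
begin

definition perms :: "nat \<Rightarrow> nat list set" where
  "perms n = {xs. length xs = n \<and> distinct xs \<and> set xs = {1..n}}"

definition contains :: "nat list \<Rightarrow> nat list \<Rightarrow> bool" where
  "contains xs p \<longleftrightarrow> (\<exists>idx. length idx = length p \<and> sorted_wrt (<) idx
      \<and> (\<forall>j\<in>set idx. j < length xs)
      \<and> (\<forall>a<length p. \<forall>b<length p. (xs ! (idx ! a) < xs ! (idx ! b)) \<longleftrightarrow> (p ! a < p ! b)))"

definition avoiding :: "nat \<Rightarrow> nat list set" where
  "avoiding n = {xs \<in> perms n. \<not> contains xs [2,4,1,3] \<and> \<not> contains xs [3,1,4,2]}"

(* pi_i for i in 0..n+1 (1-based), with pi_0 = pi_{n+1} = +infinity *)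
definition pval :: "nat list \<Rightarrow> nat \<Rightarrow> enat" where
  "pval xs i = (if i = 0 \<or> i > length xs then \<infinity> else enat (xs ! (i - 1)))"

definition des :: "nat list \<Rightarrow> nat" where
  "des xs = card {i \<in> {1..length xs}. pval xs i > pval xs (i + 1)}"

definition dd :: "nat list \<Rightarrow> nat" where
  "dd xs = card {i \<in> {1..length xs}. pval xs (i - 1) > pval xs i \<and> pval xs i > pval xs (i + 1)}"

datatype sign = Plus | Minus

(* labels alternate along every right chain: each node differs from its right child *)
fun di_sk :: "sign tree \<Rightarrow> bool" where
  "di_sk Leaf = True"
| "di_sk (Node l a r) = (di_sk l \<and> di_sk r \<and>
     (case r of Leaf \<Rightarrow> True | Node _ b _ \<Rightarrow> b \<noteq> a))"

definition DT :: "nat \<Rightarrow> sign tree set" where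
  "DT n = {t. di_sk t \<and> size t = n - 1}"

definition n_minus :: "sign tree \<Rightarrow> nat" where
  "n_minus t = length (filter (\<lambda>x. x = Minus) (inorder t))"

definition SS :: "nat \<Rightarrow> nat \<Rightarrow> nat list set" where
  "SS n k = {xs \<in> avoiding n. dd xs = 0 \<and> des xs = k}"

definition DT2 :: "nat \<Rightarrow> nat \<Rightarrow> sign tree set" where
  "DT2 n k = {t \<in> DT n.
      (\<forall>i. i + 1 < length (inorder t) \<longrightarrow>
         \<not> (inorder t ! i = Minus \<and> inorder t ! (i + 1) = Minus))
    \<and> (\<forall>x xs. inorder t = x # xs \<longrightarrow> x = Plus)
    \<and> n_minus t = k}"

end

theory Submission
  imports Defs
begin



definition no2413 :: "nat list \<Rightarrow> bool" where
  "no2413 xs \<longleftrightarrow> \<not>(\<exists>i j k l. i<j \<and> j<k \<and> k<l \<and> l<length xs \<and>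
      xs!k < xs!i \<and> xs!i < xs!l \<and> xs!l < xs!j)"

definition no3142 :: "nat list \<Rightarrow> bool" where
  "no3142 xs \<longleftrightarrow> \<not>(\<exists>i j k l. i<j \<and> j<k \<and> k<l \<and> l<length xs \<and>
      xs!j < xs!l \<and> xs!l < xs!i \<and> xs!i < xs!k)"

lemma len4: "length idx = 4 \<Longrightarrow> \<exists>a b c d. idx = [a,b,c,d]"
  by (cases idx; cases "tl idx"; cases "tl (tl idx)"; cases "tl (tl (tl idx))"; auto)

lemma all4: "(\<forall>a<(4::nat). P a) \<longleftrightarrow> P 0 \<and> P 1 \<and> P 2 \<and> P 3"
  by (auto simp: less_Suc_eq numeral_eq_Suc)

lemma contains4: "contains xs [p0,p1,p2,p3] \<longleftrightarrow> (\<exists>i j k l. i<j \<and> j<k \<and> k<l \<and> l<length xs \<and>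
   (\<forall>a<4. \<forall>b<4. (xs!([i,j,k,l]!a) < xs!([i,j,k,l]!b)) = ([p0,p1,p2,p3]!a < [p0,p1,p2,p3]!b)))"
proof -
  have L: "length [p0,p1,p2,p3] = 4" by simp
  show ?thesis unfolding contains_def L
  proof
    assume "\<exists>idx. length idx = 4 \<and> sorted_wrt (<) idx \<and> (\<forall>j\<in>set idx. j < length xs) \<and>
      (\<forall>a<4. \<forall>b<4. (xs ! (idx ! a) < xs ! (idx ! b)) = ([p0, p1, p2, p3] ! a < [p0, p1, p2, p3] ! b))"
    then obtain idx where h: "length idx = 4" "sorted_wrt (<) idx" "\<forall>j\<in>set idx. j < length xs"
      "\<forall>a<4. \<forall>b<4. (xs ! (idx ! a) < xs ! (idx ! b)) = ([p0, p1, p2, p3] ! a < [p0, p1, p2, p3] ! b)"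
      by blast
    then obtain a b c d where idx: "idx = [a,b,c,d]" using len4 by blast
    have o: "a<b" "b<c" "c<d" "d<length xs" using h(2,3) unfolding idx by auto
    show "\<exists>i j k l. i<j \<and> j<k \<and> k<l \<and> l<length xs \<and>
     (\<forall>a<4. \<forall>b<4. (xs!([i,j,k,l]!a) < xs!([i,j,k,l]!b)) = ([p0,p1,p2,p3]!a < [p0,p1,p2,p3]!b))"
      using o h(4) unfolding idx by blast
  next
    assume "\<exists>i j k l. i<j \<and> j<k \<and> k<l \<and> l<length xs \<and>
     (\<forall>a<4. \<forall>b<4. (xs!([i,j,k,l]!a) < xs!([i,j,k,l]!b)) = ([p0,p1,p2,p3]!a < [p0,p1,p2,p3]!b))"
    then obtain i j k l where h: "i<j" "j<k" "k<l" "l<length xs"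
     "\<forall>a<4. \<forall>b<4. (xs!([i,j,k,l]!a) < xs!([i,j,k,l]!b)) = ([p0,p1,p2,p3]!a < [p0,p1,p2,p3]!b)"
      by blast
    have "length [i,j,k,l] = 4" "sorted_wrt (<) [i,j,k,l]" "\<forall>j\<in>set [i,j,k,l]. j < length xs"
      using h(1-4) by auto
    with h(5) show "\<exists>idx. length idx = 4 \<and> sorted_wrt (<) idx \<and> (\<forall>j\<in>set idx. j < length xs) \<and>
      (\<forall>a<4. \<forall>b<4. (xs ! (idx ! a) < xs ! (idx ! b)) = ([p0, p1, p2, p3] ! a < [p0, p1, p2, p3] ! b))"
      by blast
  qed
qed

lemma contains_2413: "contains xs [2,4,1,3] \<longleftrightarrow> \<not> no2413 xs"
proof
  assume "contains xs [2,4,1,3]"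
  then show "\<not> no2413 xs" unfolding contains4 no2413_def all4
    by (simp add: numeral_eq_Suc) blast
next
  assume "\<not> no2413 xs"
  then obtain i j k l where h: "i<j" "j<k" "k<l" "l<length xs" "xs!k < xs!i" "xs!i < xs!l" "xs!l < xs!j"
    unfolding no2413_def by blast
  show "contains xs [2,4,1,3]" unfolding contains4 all4
    apply (rule exI[of _ i], rule exI[of _ j], rule exI[of _ k], rule exI[of _ l])
    using h by (simp add: numeral_eq_Suc)
qed

lemma contains_3142: "contains xs [3,1,4,2] \<longleftrightarrow> \<not> no3142 xs"
proof
  assume "contains xs [3,1,4,2]"
  then show "\<not> no3142 xs" unfolding contains4 no3142_def all4
    by (simp add: numeral_eq_Suc) blast
next
  assume "\<not> no3142 xs"
  then obtain i j k l where h: "i<j" "j<k" "k<l" "l<length xs" "xs!j < xs!l" "xs!l < xs!i" "xs!i < xs!k"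
    unfolding no3142_def by blast
  show "contains xs [3,1,4,2]" unfolding contains4 all4
    apply (rule exI[of _ i], rule exI[of _ j], rule exI[of _ k], rule exI[of _ l])
    using h by (simp add: numeral_eq_Suc)
qed




fun P :: "sign tree \<Rightarrow> nat list" where
  "P Leaf = [1]"
| "P (Node l Plus r) = P l @ map (\<lambda>x. x + Suc (size l)) (P r)"
| "P (Node l Minus r) = map (\<lambda>x. x + Suc (size r)) (P l) @ P r"

lemma img_shift: "(\<lambda>x::nat. x + c) ` {a..b} = {a+c..b+c}"
proof
  show "{a+c..b+c} \<subseteq> (\<lambda>x::nat. x + c) ` {a..b}"
  proof
    fix y assume "y \<in> {a+c..b+c}"
    then show "y \<in> (\<lambda>x::nat. x + c) ` {a..b}" by (intro image_eqI[where x="y - c"]) auto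
  qed
qed auto

lemma P_len[simp]: "length (P t) = Suc (size t)"
proof (induction t rule: P.induct) qed auto

lemma P_set: "set (P t) = {1..Suc (size t)}"
proof (induction t rule: P.induct)
  case 1 then show ?case by simp
next
  case (2 l r)
  have "(\<lambda>x. x + Suc (size l)) ` {1..Suc (size r)} = {Suc (Suc (size l))..Suc (size l) + Suc (size r)}"
    by (simp only: img_shift) simp
  then show ?case using 2 by auto
next
  case (3 l r)
  have "(\<lambda>x. x + Suc (size r)) ` {1..Suc (size l)} = {Suc (Suc (size r))..Suc (size r) + Suc (size l)}"
    by (simp only: img_shift) simp
  then show ?case using 3 by auto
qed

lemma P_distinct: "distinct (P t)"
proof (induction t rule: P.induct)
  case 1 then show ?case by simp
next
  case (2 l r)
  then show ?case using P_set[of l] P_set[of r] by (auto simp: distinct_map inj_on_def)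
next
  case (3 l r)
  then show ?case using P_set[of l] P_set[of r] by (auto simp: distinct_map inj_on_def)
qed

lemma P_perms: "P t \<in> perms (Suc (size t))"
  unfolding perms_def using P_set P_distinct by auto




lemma shift_conds:
  "(i<j \<and> j<k \<and> k<l \<and> l<length (map (\<lambda>x. x + (c::nat)) xs) \<and> Q (map (\<lambda>x. x + c) xs!i) (map (\<lambda>x. x + c) xs!j) (map (\<lambda>x. x + c) xs!k) (map (\<lambda>x. x + c) xs!l))
   = (i<j \<and> j<k \<and> k<l \<and> l<length xs \<and> Q (xs!i + c) (xs!j + c) (xs!k + c) (xs!l + c))"
proof (cases "i<j \<and> j<k \<and> k<l \<and> l<length xs")
  case True then show ?thesis by simp
next
  case False then show ?thesis by auto
qed

lemma no2413_shift[simp]: "no2413 (map (\<lambda>x. x + c) xs) = no2413 xs"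
  unfolding no2413_def
  using shift_conds[where Q="\<lambda>a b c d. c < a \<and> a < d \<and> d < b" and c=c and xs=xs] by simp
lemma no3142_shift[simp]: "no3142 (map (\<lambda>x. x + c) xs) = no3142 xs"
  unfolding no3142_def
  using shift_conds[where Q="\<lambda>a b c d. b < d \<and> d < a \<and> a < c" and c=c and xs=xs] by simp

lemma split_cases:
  fixes i j k l m :: nat
  assumes "i<j" "j<k" "k<l"
  shows "l < m \<or> m \<le> i \<or> (i < m \<and> m \<le> j) \<or> (j < m \<and> m \<le> k) \<or> (k < m \<and> m \<le> l)"
  using assms by linarith

definition crossrel :: "nat list \<Rightarrow> nat list \<Rightarrow> bool" where
  "crossrel xs ys \<longleftrightarrow> (\<forall>a<length xs. \<forall>b<length ys. xs!a < ys!b) \<or> (\<forall>a<length xs. \<forall>b<length ys. xs!a > ys!b)"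

lemma cross_pos:
  assumes "crossrel xs ys" "i<j" "j<k" "k<l" "l<length (xs@ys)"
  obtains "l < length xs" | "length xs \<le> i"
   | "\<forall>a\<in>{i,j,k,l}. \<forall>b\<in>{i,j,k,l}. a < length xs \<longrightarrow> length xs \<le> b \<longrightarrow> (xs@ys)!a < (xs@ys)!b"
     "i < length xs" "length xs \<le> l"
   | "\<forall>a\<in>{i,j,k,l}. \<forall>b\<in>{i,j,k,l}. a < length xs \<longrightarrow> length xs \<le> b \<longrightarrow> (xs@ys)!a > (xs@ys)!b"
     "i < length xs" "length xs \<le> l"
proof -
  have r: "\<forall>a\<in>{i,j,k,l}. a < length (xs@ys)" using assms by auto
  show ?thesis
  proof (cases "l < length xs \<or> length xs \<le> i")
    case True then show ?thesis using that by blast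
  next
    case F: False
    show ?thesis using assms(1) unfolding crossrel_def
    proof
      assume H: "\<forall>a<length xs. \<forall>b<length ys. xs!a < ys!b"
      have "\<forall>a\<in>{i,j,k,l}. \<forall>b\<in>{i,j,k,l}. a < length xs \<longrightarrow> length xs \<le> b \<longrightarrow> (xs@ys)!a < (xs@ys)!b"
        using r H by (auto simp: nth_append)
      then show ?thesis using that F by auto
    next
      assume H: "\<forall>a<length xs. \<forall>b<length ys. xs!a > ys!b"
      have "\<forall>a\<in>{i,j,k,l}. \<forall>b\<in>{i,j,k,l}. a < length xs \<longrightarrow> length xs \<le> b \<longrightarrow> (xs@ys)!a > (xs@ys)!b"
        using r H by (auto simp: nth_append)
      then show ?thesis using that F by auto
    qed
  qed
qed

lemma no2413_append:
  assumes A: "no2413 xs" "no2413 ys" and C: "crossrel xs ys"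
  shows "no2413 (xs @ ys)"
  unfolding no2413_def
proof clarify
  fix i j k l
  assume h: "i<j" "j<k" "k<l" "l<length (xs@ys)" "(xs@ys)!k < (xs@ys)!i" "(xs@ys)!i < (xs@ys)!l" "(xs@ys)!l < (xs@ys)!j"
  show False
  proof (rule cross_pos[OF C h(1-4)])
    assume "l < length xs"
    then have "xs!k < xs!i" "xs!i < xs!l" "xs!l < xs!j" "l < length xs"
      using h by (auto simp: nth_append)
    then show False using A(1) h(1-3) unfolding no2413_def by blast
  next
    let ?m = "length xs"
    assume L: "?m \<le> i"
    then have "ys!(k - ?m) < ys!(i - ?m)" "ys!(i - ?m) < ys!(l - ?m)" "ys!(l - ?m) < ys!(j - ?m)"
      "i - ?m < j - ?m" "j - ?m < k - ?m" "k - ?m < l - ?m" "l - ?m < length ys"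
      using h by (auto simp: nth_append)
    then show False using A(2) unfolding no2413_def by blast
  next
    assume H: "\<forall>a\<in>{i,j,k,l}. \<forall>b\<in>{i,j,k,l}. a < length xs \<longrightarrow> length xs \<le> b \<longrightarrow> (xs@ys)!a < (xs@ys)!b"
     "i < length xs" "length xs \<le> l"
    have Q: "\<And>a b. a\<in>{i,j,k,l} \<Longrightarrow> b\<in>{i,j,k,l} \<Longrightarrow> a < length xs \<Longrightarrow> length xs \<le> b \<Longrightarrow> (xs@ys)!a < (xs@ys)!b"
      using H(1) by blast
    have q: "a < length xs \<Longrightarrow> length xs \<le> b \<Longrightarrow> (xs@ys)!a < (xs@ys)!b" if "a\<in>{i,j,k,l}" "b\<in>{i,j,k,l}" for a b
      using Q that by blast
    show False
    proof (cases "j < length xs")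
      case True
      show False
      proof (cases "k < length xs")
        case True
        then show False using q[of k l] q[of j l] q[of i l] h H(2,3) \<open>j < length xs\<close> by simp
      next
        case False
        then show False using q[of i k] q[of j l] q[of i l] q[of j k] h H(2,3) \<open>j < length xs\<close> by simp
      qed
    next
      case False
      then show False using q[of i k] q[of i j] q[of i l] h H(2,3) by simp
    qed
  next
    assume H: "\<forall>a\<in>{i,j,k,l}. \<forall>b\<in>{i,j,k,l}. a < length xs \<longrightarrow> length xs \<le> b \<longrightarrow> (xs@ys)!a > (xs@ys)!b"
     "i < length xs" "length xs \<le> l"
    have Q: "\<And>a b. a\<in>{i,j,k,l} \<Longrightarrow> b\<in>{i,j,k,l} \<Longrightarrow> a < length xs \<Longrightarrow> length xs \<le> b \<Longrightarrow> (xs@ys)!a > (xs@ys)!b"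
      using H(1) by blast
    have q: "a < length xs \<Longrightarrow> length xs \<le> b \<Longrightarrow> (xs@ys)!a > (xs@ys)!b" if "a\<in>{i,j,k,l}" "b\<in>{i,j,k,l}" for a b
      using Q that by blast
    show False
    proof (cases "j < length xs")
      case True
      show False
      proof (cases "k < length xs")
        case True
        then show False using q[of k l] q[of j l] q[of i l] h H(2,3) \<open>j < length xs\<close> by simp
      next
        case False
        then show False using q[of i k] q[of j l] q[of i l] q[of j k] h H(2,3) \<open>j < length xs\<close> by simp
      qed
    next
      case False
      then show False using q[of i k] q[of i j] q[of i l] h H(2,3) by simp
    qed
  qed
qed

lemma no3142_append:
  assumes A: "no3142 xs" "no3142 ys" and C: "crossrel xs ys"
  shows "no3142 (xs @ ys)"
  unfolding no3142_def
proof clarify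
  fix i j k l
  assume h: "i<j" "j<k" "k<l" "l<length (xs@ys)" "(xs@ys)!j < (xs@ys)!l" "(xs@ys)!l < (xs@ys)!i" "(xs@ys)!i < (xs@ys)!k"
  show False
  proof (rule cross_pos[OF C h(1-4)])
    assume "l < length xs"
    then have "xs!j < xs!l" "xs!l < xs!i" "xs!i < xs!k" "l < length xs"
      using h by (auto simp: nth_append)
    then show False using A(1) h(1-3) unfolding no3142_def by blast
  next
    let ?m = "length xs"
    assume L: "?m \<le> i"
    then have "ys!(j - ?m) < ys!(l - ?m)" "ys!(l - ?m) < ys!(i - ?m)" "ys!(i - ?m) < ys!(k - ?m)"
      "i - ?m < j - ?m" "j - ?m < k - ?m" "k - ?m < l - ?m" "l - ?m < length ys"
      using h by (auto simp: nth_append)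
    then show False using A(2) unfolding no3142_def by blast
  next
    assume H: "\<forall>a\<in>{i,j,k,l}. \<forall>b\<in>{i,j,k,l}. a < length xs \<longrightarrow> length xs \<le> b \<longrightarrow> (xs@ys)!a < (xs@ys)!b"
     "i < length xs" "length xs \<le> l"
    have Q: "\<And>a b. a\<in>{i,j,k,l} \<Longrightarrow> b\<in>{i,j,k,l} \<Longrightarrow> a < length xs \<Longrightarrow> length xs \<le> b \<Longrightarrow> (xs@ys)!a < (xs@ys)!b"
      using H(1) by blast
    have q: "a < length xs \<Longrightarrow> length xs \<le> b \<Longrightarrow> (xs@ys)!a < (xs@ys)!b" if "a\<in>{i,j,k,l}" "b\<in>{i,j,k,l}" for a b
      using Q that by blast
    show False
    proof (cases "j < length xs")
      case True
      show False
      proof (cases "k < length xs")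
        case True
        then show False using q[of k l] q[of j l] q[of i l] h H(2,3) \<open>j < length xs\<close> by simp
      next
        case False
        then show False using q[of i k] q[of j l] q[of i l] q[of j k] h H(2,3) \<open>j < length xs\<close> by simp
      qed
    next
      case False
      then show False using q[of i k] q[of i j] q[of i l] h H(2,3) by simp
    qed
  next
    assume H: "\<forall>a\<in>{i,j,k,l}. \<forall>b\<in>{i,j,k,l}. a < length xs \<longrightarrow> length xs \<le> b \<longrightarrow> (xs@ys)!a > (xs@ys)!b"
     "i < length xs" "length xs \<le> l"
    have Q: "\<And>a b. a\<in>{i,j,k,l} \<Longrightarrow> b\<in>{i,j,k,l} \<Longrightarrow> a < length xs \<Longrightarrow> length xs \<le> b \<Longrightarrow> (xs@ys)!a > (xs@ys)!b"
      using H(1) by blast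
    have q: "a < length xs \<Longrightarrow> length xs \<le> b \<Longrightarrow> (xs@ys)!a > (xs@ys)!b" if "a\<in>{i,j,k,l}" "b\<in>{i,j,k,l}" for a b
      using Q that by blast
    show False
    proof (cases "j < length xs")
      case True
      show False
      proof (cases "k < length xs")
        case True
        then show False using q[of k l] q[of j l] q[of i l] h H(2,3) \<open>j < length xs\<close> by simp
      next
        case False
        then show False using q[of i k] q[of j l] q[of i l] q[of j k] h H(2,3) \<open>j < length xs\<close> by simp
      qed
    next
      case False
      then show False using q[of i k] q[of i j] q[of i l] h H(2,3) by simp
    qed
  qed
qed




lemma P_bound: "i < Suc (size t) \<Longrightarrow> 1 \<le> P t ! i \<and> P t ! i \<le> Suc (size t)"
  using nth_mem[of i "P t"] P_set[of t] by auto

lemma P_cross: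
  "crossrel (P l) (map (\<lambda>x. x + Suc (size l)) (P r))"
  "crossrel (map (\<lambda>x. x + Suc (size r)) (P l)) (P r)"
   apply (unfold crossrel_def; rule disjI1)
   apply (intro allI impI) subgoal for a b using P_bound[of a l] P_bound[of b r] by simp
  apply (unfold crossrel_def; rule disjI2)
   apply (intro allI impI) subgoal for a b using P_bound[of a l] P_bound[of b r] by simp
  done

lemma P_avoid: "no2413 (P t) \<and> no3142 (P t)"
proof (induction t rule: P.induct)
  case 1 then show ?case unfolding no2413_def no3142_def by auto
next
  case (2 l r) then show ?case
    by (simp only: P.simps) (intro conjI no2413_append no3142_append P_cross; (simp only: no2413_shift no3142_shift)?; simp)
next
  case (3 l r) then show ?case
    by (simp only: P.simps) (intro conjI no2413_append no3142_append P_cross; (simp only: no2413_shift no3142_shift)?; simp)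
qed

lemma P_desc: "i < size t \<Longrightarrow> (P t ! i > P t ! Suc i) \<longleftrightarrow> inorder t ! i = Minus"
proof (induction t arbitrary: i rule: P.induct)
  case 1 then show ?case by simp
next
  case (2 l r)
  consider "i < size l" | "i = size l" | "i > size l" by linarith
  then show ?case
  proof cases
    case 1 then show ?thesis using "2.IH"(1)[of i] by (simp add: nth_append)
  next
    case 2 then show ?thesis using P_bound[of "size l" l] P_bound[of 0 r] by (simp add: nth_append)
  next
    case 3
    then obtain j where j: "i = Suc (size l) + j" by (metis less_imp_Suc_add add_Suc)
    then show ?thesis using "2.IH"(2)[of j] "2.prems" by (simp add: nth_append)
  qed
next
  case (3 l r)
  consider "i < size l" | "i = size l" | "i > size l" by linarith
  then show ?case
  proof cases
    case 1 then show ?thesis using "3.IH"(1)[of i] by (simp add: nth_append)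
  next
    case 2 then show ?thesis using P_bound[of "size l" l] P_bound[of 0 r] by (simp add: nth_append)
  next
    case 3
    then obtain j where j: "i = Suc (size l) + j" by (metis less_imp_Suc_add add_Suc)
    then show ?thesis using "3.IH"(2)[of j] "3.prems" by (simp add: nth_append)
  qed
qed




definition psplit :: "nat list \<Rightarrow> nat \<Rightarrow> bool" where
  "psplit xs k \<longleftrightarrow> 0<k \<and> k<length xs \<and> (\<forall>a<k. \<forall>b. k\<le>b \<longrightarrow> b<length xs \<longrightarrow> xs!a < xs!b)"
definition msplit :: "nat list \<Rightarrow> nat \<Rightarrow> bool" where
  "msplit xs k \<longleftrightarrow> 0<k \<and> k<length xs \<and> (\<forall>a<k. \<forall>b. k\<le>b \<longrightarrow> b<length xs \<longrightarrow> xs!a > xs!b)"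

lemma psplit_P: "psplit (P (Node l Plus r)) (Suc (size l))"
  unfolding psplit_def
proof (intro conjI allI impI)
  fix a b assume h: "a < Suc (size l)" "Suc (size l) \<le> b" "b < length (P \<langle>l, Plus, r\<rangle>)"
  then have r1: "b - Suc (size l) < Suc (size r)" by simp
  show "P \<langle>l, Plus, r\<rangle> ! a < P \<langle>l, Plus, r\<rangle> ! b"
    using P_bound[OF h(1)] P_bound[OF r1] h by (simp add: nth_append)
qed auto

lemma msplit_P: "msplit (P (Node l Minus r)) (Suc (size l))"
  unfolding msplit_def
proof (intro conjI allI impI)
  fix a b assume h: "a < Suc (size l)" "Suc (size l) \<le> b" "b < length (P \<langle>l, Minus, r\<rangle>)"
  then have r1: "b - Suc (size l) < Suc (size r)" by simp
  show "P \<langle>l, Minus, r\<rangle> ! a > P \<langle>l, Minus, r\<rangle> ! b"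
    using P_bound[OF h(1)] P_bound[OF r1] h by (simp add: nth_append)
qed auto

lemma psplit_fl: "psplit xs k \<Longrightarrow> xs!0 < xs!(length xs - 1)"
  unfolding psplit_def by auto
lemma msplit_fl: "msplit xs k \<Longrightarrow> xs!0 > xs!(length xs - 1)"
  unfolding msplit_def by auto

lemma not_psplit_Minus: "\<not> psplit (P (Node l Minus r)) k"
  using msplit_fl[OF msplit_P[of l r]] psplit_fl[of "P (Node l Minus r)" k] by linarith
lemma not_msplit_Plus: "\<not> msplit (P (Node l Plus r)) k"
  using psplit_fl[OF psplit_P[of l r]] msplit_fl[of "P (Node l Plus r)" k] by linarith

lemma psplit_shift[simp]: "psplit (map (\<lambda>x. x + c) xs) k = psplit xs k"
  unfolding psplit_def by auto
lemma msplit_shift[simp]: "msplit (map (\<lambda>x. x + c) xs) k = msplit xs k"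
  unfolding msplit_def by auto

lemma psplit_right: "psplit (xs@ys) k \<Longrightarrow> length xs < k \<Longrightarrow> psplit ys (k - length xs)"
  unfolding psplit_def
proof (elim conjE, intro conjI allI impI)
  fix a b assume h: "\<forall>a<k. \<forall>b. k \<le> b \<longrightarrow> b < length (xs @ ys) \<longrightarrow> (xs @ ys) ! a < (xs @ ys) ! b"
    "length xs < k" "a < k - length xs" "k - length xs \<le> b" "b < length ys"
  then show "ys ! a < ys ! b"
    using h(1)[rule_format, of "a + length xs" "b + length xs"] by (simp add: nth_append)
qed auto

lemma msplit_right: "msplit (xs@ys) k \<Longrightarrow> length xs < k \<Longrightarrow> msplit ys (k - length xs)"
  unfolding msplit_def
proof (elim conjE, intro conjI allI impI)
  fix a b assume h: "\<forall>a<k. \<forall>b. k \<le> b \<longrightarrow> b < length (xs @ ys) \<longrightarrow> (xs @ ys) ! a > (xs @ ys) ! b"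
    "length xs < k" "a < k - length xs" "k - length xs \<le> b" "b < length ys"
  then show "ys ! a > ys ! b"
    using h(1)[rule_format, of "a + length xs" "b + length xs"] by (simp add: nth_append)
qed auto

lemma right_no_psplit: "di_sk (Node l Plus r) \<Longrightarrow> \<not> psplit (P r) j"
proof (cases r)
  case Leaf then show ?thesis unfolding psplit_def by auto
next
  case (Node l' b r')
  assume "di_sk (Node l Plus r)"
  then have "b = Minus" using Node by (cases b) auto
  then show ?thesis using Node not_psplit_Minus by simp
qed

lemma right_no_msplit: "di_sk (Node l Minus r) \<Longrightarrow> \<not> msplit (P r) j"
proof (cases r)
  case Leaf then show ?thesis unfolding msplit_def by auto
next
  case (Node l' b r')
  assume "di_sk (Node l Minus r)"
  then have "b = Plus" using Node by (cases b) auto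
  then show ?thesis using Node not_msplit_Plus by simp
qed

lemma shift_inj: "map (\<lambda>x. x + (c::nat)) xs = map (\<lambda>x. x + c) ys \<Longrightarrow> xs = ys"
  by (simp add: inj_map_eq_map inj_on_def)

lemma P_inj: "di_sk t \<Longrightarrow> di_sk t' \<Longrightarrow> P t = P t' \<Longrightarrow> t = t'"
proof (induction t arbitrary: t')
  case Leaf
  then have "length (P Leaf) = length (P t')" by simp
  then have "size t' = 0" by simp
  then show ?case by simp
next
  case (Node l a r)
  have "size t' = size (Node l a r)" using P_len[of t'] P_len[of "Node l a r"] Node.prems(3) by simp
  then obtain l' a' r' where t': "t' = Node l' a' r'" by (cases t') auto
  have dl: "di_sk l" "di_sk r" "di_sk l'" "di_sk r'" using Node.prems t' by auto
  have sz: "size l + size r = size l' + size r'" using \<open>size t' = _\<close> t' by simp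
  show ?case
  proof (cases a)
    case Plus
    have a': "a' = Plus"
    proof (rule ccontr)
      assume "a' \<noteq> Plus" then have "a' = Minus" by (cases a') auto
      then show False using psplit_P[of l r] Node.prems(3) t' Plus not_psplit_Minus by metis
    qed
    have E: "P l @ map (\<lambda>x. x + Suc (size l)) (P r) = P l' @ map (\<lambda>x. x + Suc (size l')) (P r')"
      using Node.prems(3) t' Plus a' by simp
    have "\<not> size l < size l'"
    proof
      assume "size l < size l'"
      have "psplit (P l @ map (\<lambda>x. x + Suc (size l)) (P r)) (Suc (size l'))"
        using psplit_P[of l' r'] E by simp
      then have "psplit (map (\<lambda>x. x + Suc (size l)) (P r)) (Suc (size l') - Suc (size l))"
        using \<open>size l < size l'\<close> psplit_right by fastforce
      then show False using right_no_psplit[of l r] Node.prems(1) Plus psplit_shift by metis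
    qed
    moreover have "\<not> size l' < size l"
    proof
      assume "size l' < size l"
      have "psplit (P l' @ map (\<lambda>x. x + Suc (size l')) (P r')) (Suc (size l))"
        using psplit_P[of l r] E by simp
      then have "psplit (map (\<lambda>x. x + Suc (size l')) (P r')) (Suc (size l) - Suc (size l'))"
        using \<open>size l' < size l\<close> psplit_right by fastforce
      then show False using right_no_psplit[of l' r'] Node.prems(2) t' a' psplit_shift by metis
    qed
    ultimately have s: "size l = size l'" by simp
    then have "P l = P l'" "map (\<lambda>x. x + Suc (size l)) (P r) = map (\<lambda>x. x + Suc (size l)) (P r')"
      using E by (simp_all add: append_eq_append_conv)
    then show ?thesis using Node.IH dl t' Plus a' shift_inj by metis
  next
    case Minus
    have a': "a' = Minus"
    proof (rule ccontr)
      assume "a' \<noteq> Minus" then have "a' = Plus" by (cases a') auto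
      then show False using msplit_P[of l r] Node.prems(3) t' Minus not_msplit_Plus by metis
    qed
    have E: "map (\<lambda>x. x + Suc (size r)) (P l) @ P r = map (\<lambda>x. x + Suc (size r')) (P l') @ P r'"
      using Node.prems(3) t' Minus a' by simp
    have "\<not> size l < size l'"
    proof
      assume "size l < size l'"
      have "msplit (map (\<lambda>x. x + Suc (size r)) (P l) @ P r) (Suc (size l'))"
        using msplit_P[of l' r'] E by simp
      then have "msplit (P r) (Suc (size l') - Suc (size l))"
        using \<open>size l < size l'\<close> msplit_right by fastforce
      then show False using right_no_msplit[of l r] Node.prems(1) Minus by simp
    qed
    moreover have "\<not> size l' < size l"
    proof
      assume "size l' < size l"
      have "msplit (map (\<lambda>x. x + Suc (size r')) (P l') @ P r') (Suc (size l))"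
        using msplit_P[of l r] E by simp
      then have "msplit (P r') (Suc (size l) - Suc (size l'))"
        using \<open>size l' < size l\<close> msplit_right by fastforce
      then show False using right_no_msplit[of l' r'] Node.prems(2) t' a' by simp
    qed
    ultimately have s: "size l = size l'" by simp
    then have sr: "size r = size r'" using sz by simp
    then have "map (\<lambda>x. x + Suc (size r)) (P l) = map (\<lambda>x. x + Suc (size r)) (P l')" "P r = P r'"
      using E s by (simp_all add: append_eq_append_conv)
    then show ?thesis using Node.IH dl t' Minus a' shift_inj by metis
  qed
qed




lemma no2413_prefix: assumes A: "no2413 (xs@ys)" shows "no2413 xs"
  unfolding no2413_def
proof clarify
  fix i j k l assume h: "i<j" "j<k" "k<l" "l<length xs" "xs!k < xs!i" "xs!i < xs!l" "xs!l < xs!j"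
  have "i < length xs" "j < length xs" "k < length xs" using h by auto
  then have "(xs@ys)!k < (xs@ys)!i \<and> (xs@ys)!i < (xs@ys)!l \<and> (xs@ys)!l < (xs@ys)!j" using h by (simp add: nth_append)
  moreover have "l < length (xs@ys)" using h by simp
  ultimately show False using A h(1-3) unfolding no2413_def by blast
qed

lemma no3142_prefix: assumes A: "no3142 (xs@ys)" shows "no3142 xs"
  unfolding no3142_def
proof clarify
  fix i j k l assume h: "i<j" "j<k" "k<l" "l<length xs" "xs!j < xs!l" "xs!l < xs!i" "xs!i < xs!k"
  have "i < length xs" "j < length xs" "k < length xs" using h by auto
  then have "(xs@ys)!j < (xs@ys)!l \<and> (xs@ys)!l < (xs@ys)!i \<and> (xs@ys)!i < (xs@ys)!k" using h by (simp add: nth_append)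
  moreover have "l < length (xs@ys)" using h by simp
  ultimately show False using A h(1-3) unfolding no3142_def by blast
qed

lemma step_p:
  assumes D: "distinct (ys@[v])" and N: "no3142 (ys@[v])" and S: "psplit ys k"
  shows "(\<exists>k. psplit (ys@[v]) k) \<or> (\<exists>k. msplit (ys@[v]) k)"
proof -
  let ?n = "length ys"
  let ?x = "ys@[v]"
  have xi: "\<And>i. i < ?n \<Longrightarrow> ?x!i = ys!i" by (simp add: nth_append)
  have xn: "?x!?n = v" by simp
  have vne: "\<And>i. i < ?n \<Longrightarrow> ys!i \<noteq> v" using D by (auto simp: in_set_conv_nth)
  have Sk: "0<k" "k<?n" "\<And>a b. a<k \<Longrightarrow> k\<le>b \<Longrightarrow> b<?n \<Longrightarrow> ys!a < ys!b"
    using S unfolding psplit_def by auto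
  show ?thesis
  proof (cases "\<forall>a<k. ys!a < v")
    case True
    have "psplit ?x k" unfolding psplit_def
    proof (intro conjI allI impI)
      fix a b assume "a<k" "k\<le>b" "b<length ?x"
      then show "?x!a < ?x!b" using True Sk xi[of a] xi[of b]
        by (cases "b < ?n") (auto simp: nth_append)
    qed (use Sk in auto)
    then show ?thesis by blast
  next
    case False
    then obtain a0 where a0: "a0<k" "ys!a0 > v" using vne Sk(2) by (meson linorder_neqE_nat less_trans)
    have big: "\<And>b. k\<le>b \<Longrightarrow> b<?n \<Longrightarrow> ys!b > v" using Sk(3)[OF a0(1)] a0(2) by force
    show ?thesis
    proof (cases "\<forall>a<k. ys!a > v")
      case True
      have "msplit ?x ?n" unfolding msplit_def
      proof (intro conjI allI impI)
        fix a b assume "a<?n" "?n\<le>b" "b<length ?x"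
        then show "?x!a > ?x!b" using True big[of a] by (cases "a<k") (auto simp: nth_append)
      qed (use Sk in auto)
      then show ?thesis by blast
    next
      case False
      then obtain a1 where a1: "a1<k" "ys!a1 < v" using vne Sk(2) by (meson linorder_neqE_nat less_trans)
      obtain j where j: "j \<le> a0" "\<forall>i<j. \<not> (i < k \<and> ys!i > v)" "j < k \<and> ys!j > v"
        using ex_least_nat_le[of "\<lambda>i. i < k \<and> ys!i > v" a0] a0 by blast
      have claim: "\<And>p. j \<le> p \<Longrightarrow> p < k \<Longrightarrow> ys!p > v"
      proof (rule ccontr)
        fix p assume p: "j \<le> p" "p < k" "\<not> ys!p > v"
        then have "ys!p < v" using vne Sk(2) by (meson linorder_neqE_nat less_trans)
        then have "j < p" using p j by (metis le_neq_implies_less)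
        have "?x!p < ?x!?n" "?x!?n < ?x!j" "?x!j < ?x!k"
          using \<open>ys!p < v\<close> j Sk(3)[of j k] Sk(2) p xi[of p] xi[of j] xi[of k] by auto
        moreover have "j < p" "p < k" "k < ?n" "?n < length ?x"
          using \<open>j<p\<close> p Sk by auto
        ultimately show False using N unfolding no3142_def by blast
      qed
      have "0 < j"
      proof (rule ccontr)
        assume "\<not> 0 < j" then have "j = 0" by simp
        then show False using claim[of a1] a1 by simp
      qed
      have low: "\<And>a. a < j \<Longrightarrow> ys!a < v"
      proof -
        fix a assume "a < j"
        then have "a < k" "\<not> ys!a > v" using j by auto
        then show "ys!a < v" using vne Sk(2) by (meson linorder_neqE_nat less_trans)
      qed
      have "psplit ?x j" unfolding psplit_def
      proof (intro conjI allI impI)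
        fix a b assume h: "a<j" "j\<le>b" "b<length ?x"
        have "a < k" using h j by auto
        consider "b < k" | "k \<le> b" "b < ?n" | "b = ?n" using h by fastforce
        then show "?x!a < ?x!b"
        proof cases
          case 1 then show ?thesis using h low[of a] claim[of b] xi[of a] xi[of b] Sk(2) by auto
        next
          case 2 then show ?thesis using Sk(3)[of a b] \<open>a<k\<close> xi[of a] xi[of b] by auto
        next
          case 3 then show ?thesis using low[of a] h xi[of a] Sk(2) j by auto
        qed
      qed (use \<open>0<j\<close> j Sk in auto)
      then show ?thesis by blast
    qed
  qed
qed




lemma step_m:
  assumes D: "distinct (ys@[v])" and N: "no2413 (ys@[v])" and S: "msplit ys k"
  shows "(\<exists>k. psplit (ys@[v]) k) \<or> (\<exists>k. msplit (ys@[v]) k)"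
proof -
  let ?n = "length ys"
  let ?x = "ys@[v]"
  have xi: "\<And>i. i < ?n \<Longrightarrow> ?x!i = ys!i" by (simp add: nth_append)
  have xn: "?x!?n = v" by simp
  have vne: "\<And>i. i < ?n \<Longrightarrow> ys!i \<noteq> v" using D by (auto simp: in_set_conv_nth)
  have Sk: "0<k" "k<?n" "\<And>a b. a<k \<Longrightarrow> k\<le>b \<Longrightarrow> b<?n \<Longrightarrow> ys!a > ys!b"
    using S unfolding msplit_def by auto
  show ?thesis
  proof (cases "\<forall>a<k. ys!a > v")
    case True
    have "msplit ?x k" unfolding msplit_def
    proof (intro conjI allI impI)
      fix a b assume "a<k" "k\<le>b" "b<length ?x"
      then show "?x!a > ?x!b" using True Sk xi[of a] xi[of b]
        by (cases "b < ?n") (auto simp: nth_append)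
    qed (use Sk in auto)
    then show ?thesis by blast
  next
    case False
    then obtain a0 where a0: "a0<k" "ys!a0 < v" using vne Sk(2) by (meson linorder_neqE_nat less_trans)
    have small: "\<And>b. k\<le>b \<Longrightarrow> b<?n \<Longrightarrow> ys!b < v" using Sk(3)[OF a0(1)] a0(2) by force
    show ?thesis
    proof (cases "\<forall>a<k. ys!a < v")
      case True
      have "psplit ?x ?n" unfolding psplit_def
      proof (intro conjI allI impI)
        fix a b assume "a<?n" "?n\<le>b" "b<length ?x"
        then show "?x!a < ?x!b" using True small[of a] by (cases "a<k") (auto simp: nth_append)
      qed (use Sk in auto)
      then show ?thesis by blast
    next
      case False
      then obtain a1 where a1: "a1<k" "ys!a1 > v" using vne Sk(2) by (meson linorder_neqE_nat less_trans)
      obtain j where j: "j \<le> a0" "\<forall>i<j. \<not> (i < k \<and> ys!i < v)" "j < k \<and> ys!j < v"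
        using ex_least_nat_le[of "\<lambda>i. i < k \<and> ys!i < v" a0] a0 by blast
      have claim: "\<And>p. j \<le> p \<Longrightarrow> p < k \<Longrightarrow> ys!p < v"
      proof (rule ccontr)
        fix p assume p: "j \<le> p" "p < k" "\<not> ys!p < v"
        then have "ys!p > v" using vne Sk(2) by (meson linorder_neqE_nat less_trans)
        then have "j < p" using p j by (metis le_neq_implies_less)
        have "?x!k < ?x!j" "?x!j < ?x!?n" "?x!?n < ?x!p"
          using \<open>ys!p > v\<close> j Sk(3)[of j k] Sk(2) p xi[of p] xi[of j] xi[of k] by auto
        moreover have "j < p" "p < k" "k < ?n" "?n < length ?x"
          using \<open>j<p\<close> p Sk by auto
        ultimately show False using N unfolding no2413_def by blast
      qed
      have "0 < j"
      proof (rule ccontr)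
        assume "\<not> 0 < j" then have "j = 0" by simp
        then show False using claim[of a1] a1 by simp
      qed
      have high: "\<And>a. a < j \<Longrightarrow> ys!a > v"
      proof -
        fix a assume "a < j"
        then have "a < k" "\<not> ys!a < v" using j by auto
        then show "ys!a > v" using vne Sk(2) by (meson linorder_neqE_nat less_trans)
      qed
      have "msplit ?x j" unfolding msplit_def
      proof (intro conjI allI impI)
        fix a b assume h: "a<j" "j\<le>b" "b<length ?x"
        have "a < k" using h j by auto
        consider "b < k" | "k \<le> b" "b < ?n" | "b = ?n" using h by fastforce
        then show "?x!a > ?x!b"
        proof cases
          case 1 then show ?thesis using h high[of a] claim[of b] xi[of a] xi[of b] Sk(2) by auto
        next
          case 2 then show ?thesis using Sk(3)[of a b] \<open>a<k\<close> xi[of a] xi[of b] by auto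
        next
          case 3 then show ?thesis using high[of a] h xi[of a] Sk(2) j by auto
        qed
      qed (use \<open>0<j\<close> j Sk in auto)
      then show ?thesis by blast
    qed
  qed
qed

lemma decomp:
  "distinct xs \<Longrightarrow> no2413 xs \<Longrightarrow> no3142 xs \<Longrightarrow> 2 \<le> length xs \<Longrightarrow>
   (\<exists>k. psplit xs k) \<or> (\<exists>k. msplit xs k)"
proof (induction xs rule: rev_induct)
  case Nil then show ?case by simp
next
  case (snoc v ys)
  show ?case
  proof (cases "length ys < 2")
    case True
    then have "length ys = 1" using snoc.prems(4) by simp
    then obtain u where u: "ys = [u]" by (cases ys) auto
    have "u \<noteq> v" using snoc.prems(1) u by simp
    then have "u < v \<or> u > v" by auto
    then show ?thesis
    proof
      assume "u < v" then have "psplit (ys@[v]) 1" using u unfolding psplit_def by auto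
      then show ?thesis by blast
    next
      assume "u > v" then have "msplit (ys@[v]) 1" using u unfolding msplit_def by auto
      then show ?thesis by blast
    qed
  next
    case False
    have "(\<exists>k. psplit ys k) \<or> (\<exists>k. msplit ys k)"
      using snoc.IH snoc.prems no2413_prefix no3142_prefix False by auto
    then show ?thesis using step_p step_m snoc.prems by blast
  qed
qed




lemma no2413_suffix: assumes A: "no2413 (xs@ys)" shows "no2413 ys"
  unfolding no2413_def
proof clarify
  fix i j k l assume h: "i<j" "j<k" "k<l" "l<length ys" "ys!k < ys!i" "ys!i < ys!l" "ys!l < ys!j"
  let ?m = "length xs"
  have "(xs@ys)!(k+?m) < (xs@ys)!(i+?m) \<and> (xs@ys)!(i+?m) < (xs@ys)!(l+?m) \<and> (xs@ys)!(l+?m) < (xs@ys)!(j+?m)"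
    using h by (simp add: nth_append)
  moreover have "i+?m < j+?m" "j+?m < k+?m" "k+?m < l+?m" "l+?m < length (xs@ys)" using h by auto
  ultimately show False using A unfolding no2413_def by blast
qed

lemma no3142_suffix: assumes A: "no3142 (xs@ys)" shows "no3142 ys"
  unfolding no3142_def
proof clarify
  fix i j k l assume h: "i<j" "j<k" "k<l" "l<length ys" "ys!j < ys!l" "ys!l < ys!i" "ys!i < ys!k"
  let ?m = "length xs"
  have "(xs@ys)!(j+?m) < (xs@ys)!(l+?m) \<and> (xs@ys)!(l+?m) < (xs@ys)!(i+?m) \<and> (xs@ys)!(i+?m) < (xs@ys)!(k+?m)"
    using h by (simp add: nth_append)
  moreover have "i+?m < j+?m" "j+?m < k+?m" "k+?m < l+?m" "l+?m < length (xs@ys)" using h by auto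
  ultimately show False using A unfolding no3142_def by blast
qed

lemma low_set:
  assumes U: "A \<union> B = {1..n::nat}" and I: "A \<inter> B = {}" and O: "\<forall>a\<in>A. \<forall>b\<in>B. a < b"
    and C: "card A = k"
  shows "A = {1..k}" "B = {k+1..n}"
proof -
  have fA: "finite A" using U by (metis finite_Un finite_atLeastAtMost)
  have sub: "A \<subseteq> {1..k}"
  proof
    fix a assume a: "a \<in> A"
    have "{1..a} \<subseteq> A"
    proof
      fix w assume w: "w \<in> {1..a}"
      have "a \<le> n" "1 \<le> a" using a U by auto
      then have "w \<in> A \<union> B" using w U by auto
      moreover have "w \<notin> B" using O a w by fastforce
      ultimately show "w \<in> A" by blast
    qed
    then have "card {1..a} \<le> card A" using fA card_mono by blast
    then have "a \<le> k" using C by simp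
    moreover have "1 \<le> a" using a U by auto
    ultimately show "a \<in> {1..k}" by simp
  qed
  moreover have "card A = card {1..k}" using C by simp
  ultimately show A: "A = {1..k}" using card_subset_eq[of "{1..k}" A] by simp
  have "B = {1..n} - A" using U I by blast
  then show "B = {k+1..n}" using A by auto
qed

lemma shifted_perm:
  assumes "set ys = {c+1..c+m}" "distinct ys" "length ys = m"
  shows "\<exists>zs. zs \<in> perms m \<and> ys = map (\<lambda>x. x + c) zs"
proof -
  let ?zs = "map (\<lambda>x. x - c) ys"
  have e: "map (\<lambda>x. x + c) ?zs = ys" unfolding map_map by (rule map_idI) (use assms(1) in auto)
  have d: "distinct ?zs" using assms(2) e by (metis distinct_map)
  have "(\<lambda>x. x + c) ` set ?zs = (\<lambda>x. x + c) ` {1..m}"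
    using e assms(1) img_shift[of c 1 m] by (metis add.commute list.set_map)
  moreover have inj: "inj (\<lambda>x::nat. x + c)" by (simp add: inj_def)
  ultimately have "set ?zs = {1..m}" by (meson inj_image_eq_iff)
  then have "?zs \<in> perms m" unfolding perms_def using d assms(3) by simp
  then show ?thesis using e by metis
qed

lemma psplit_combine:
  assumes "psplit xs k" "psplit (drop k xs) j" shows "psplit xs (k+j)"
  using assms unfolding psplit_def
proof (elim conjE, intro conjI allI impI)
  fix a b assume h: "\<forall>a<k. \<forall>b. k \<le> b \<longrightarrow> b < length xs \<longrightarrow> xs ! a < xs ! b"
    "\<forall>a<j. \<forall>b. j \<le> b \<longrightarrow> b < length (drop k xs) \<longrightarrow> drop k xs ! a < drop k xs ! b"
    "a < k + j" "k + j \<le> b" "b < length xs" "0<k" "k < length xs"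
  show "xs!a < xs!b"
  proof (cases "a < k")
    case True then show ?thesis using h(1,4,5) by auto
  next
    case False
    then show ?thesis using h(2)[rule_format, of "a - k" "b - k"] h(3-5) by auto
  qed
qed auto

lemma msplit_combine:
  assumes "msplit xs k" "msplit (drop k xs) j" shows "msplit xs (k+j)"
  using assms unfolding msplit_def
proof (elim conjE, intro conjI allI impI)
  fix a b assume h: "\<forall>a<k. \<forall>b. k \<le> b \<longrightarrow> b < length xs \<longrightarrow> xs ! a > xs ! b"
    "\<forall>a<j. \<forall>b. j \<le> b \<longrightarrow> b < length (drop k xs) \<longrightarrow> drop k xs ! a > drop k xs ! b"
    "a < k + j" "k + j \<le> b" "b < length xs" "0<k" "k < length xs"
  show "xs!a > xs!b"
  proof (cases "a < k")
    case True then show ?thesis using h(1,4,5) by auto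
  next
    case False
    then show ?thesis using h(2)[rule_format, of "a - k" "b - k"] h(3-5) by auto
  qed
qed auto

lemma take_drop_rel:
  assumes "\<forall>a<k. \<forall>b. k\<le>b \<longrightarrow> b<length xs \<longrightarrow> R (xs!a) (xs!b)"
  shows "\<forall>x\<in>set (take k xs). \<forall>y\<in>set (drop k xs). R x y"
  using assms by (auto simp: in_set_conv_nth)




lemma P_surj:
  "xs \<in> perms n \<Longrightarrow> no2413 xs \<Longrightarrow> no3142 xs \<Longrightarrow> 1 \<le> n \<Longrightarrow> \<exists>t. di_sk t \<and> size t = n - 1 \<and> P t = xs"
proof (induction n arbitrary: xs rule: less_induct)
  case (less n)
  have len: "length xs = n" and dis: "distinct xs" and st: "set xs = {1..n}"
    using less.prems(1) unfolding perms_def by auto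
  have av: "no2413 xs" "no3142 xs" using less.prems by auto
  have td: "take k xs @ drop k xs = xs" for k by simp
  show ?case
  proof (cases "n = 1")
    case True
    then obtain x where x: "xs = [x]" using len by (cases xs) auto
    then have "x = 1" using st True by auto
    then show ?thesis using x True by (intro exI[of _ Leaf]) auto
  next
    case False
    then have n2: "2 \<le> n" using less.prems(4) by simp
    have bnd: "\<And>y. psplit xs y \<longrightarrow> y \<le> n" "\<And>y. msplit xs y \<longrightarrow> y \<le> n"
      unfolding psplit_def msplit_def using len by auto
    have "(\<exists>k. psplit xs k) \<or> (\<exists>k. msplit xs k)" using decomp dis av n2 len by simp
    then show ?thesis
    proof
      assume "\<exists>k. psplit xs k"
      then obtain k0 where "psplit xs k0" by blast
      then obtain k where k: "psplit xs k" and kmax: "\<And>y. psplit xs y \<Longrightarrow> y \<le> k"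
        using Nat.ex_has_greatest_nat[of "psplit xs" k0 n] bnd by blast
      have k1: "0 < k" "k < n" and ord: "\<forall>a<k. \<forall>b. k\<le>b \<longrightarrow> b<length xs \<longrightarrow> xs!a < xs!b"
        using k len unfolding psplit_def by auto
      have U: "set (take k xs) \<union> set (drop k xs) = {1..n}" using st td[of k] by (metis set_append)
      have I: "set (take k xs) \<inter> set (drop k xs) = {}" using dis td[of k] by (metis distinct_append)
      have C: "card (set (take k xs)) = k" using dis k1 len by (simp add: distinct_card)
      have sA: "set (take k xs) = {1..k}" and sB: "set (drop k xs) = {k+1..n}"
        using low_set[OF U I take_drop_rel[OF ord] C] by auto
      have psg: "take k xs \<in> perms k" unfolding perms_def using sA dis len k1 by simp
      have asg: "no2413 (take k xs)" "no3142 (take k xs)"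
        using av td[of k] no2413_prefix no3142_prefix by metis+
      have "\<exists>t. di_sk t \<and> size t = k - 1 \<and> P t = take k xs"
        using less.IH[OF k1(2) psg asg] k1 by simp
      then obtain tsg where tsg: "di_sk tsg" "size tsg = k - 1" "P tsg = take k xs" by blast
      have "set (drop k xs) = {k+1..k+(n-k)}" using sB k1 by simp
      then obtain tau where tau: "tau \<in> perms (n-k)" "drop k xs = map (\<lambda>x. x + k) tau"
        using shifted_perm[of "drop k xs" k "n-k"] dis len by auto
      have atau: "no2413 tau" "no3142 tau"
        using av td[of k] no2413_suffix no3142_suffix tau(2) no2413_shift no3142_shift by metis+
      have "\<exists>t. di_sk t \<and> size t = n - k - 1 \<and> P t = tau"
        using less.IH[of "n-k" tau] tau(1) atau k1 by simp
      then obtain ttau where ttau: "di_sk ttau" "size ttau = n - k - 1" "P ttau = tau" by blast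
      have np: "case ttau of Leaf \<Rightarrow> True | Node _ b _ \<Rightarrow> b \<noteq> Plus"
      proof (cases ttau)
        case (Node l' b r')
        show ?thesis
        proof (cases b)
          case Plus
          have "psplit tau (Suc (size l'))" using psplit_P[of l' r'] Node Plus ttau(3) by simp
          then have "psplit (drop k xs) (Suc (size l'))" using tau(2) by simp
          then have "psplit xs (k + Suc (size l'))" using psplit_combine k by blast
          then show ?thesis using kmax by fastforce
        qed (use Node in auto)
      qed auto
      have "P (Node tsg Plus ttau) = xs"
        using tsg ttau tau k1 td[of k] by simp
      moreover have "di_sk (Node tsg Plus ttau)" using tsg ttau np by simp
      moreover have "size (Node tsg Plus ttau) = n - 1" using tsg ttau k1 by simp
      ultimately show ?thesis by blast
    next
      assume "\<exists>k. msplit xs k"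
      then obtain k0 where "msplit xs k0" by blast
      then obtain k where k: "msplit xs k" and kmax: "\<And>y. msplit xs y \<Longrightarrow> y \<le> k"
        using Nat.ex_has_greatest_nat[of "msplit xs" k0 n] bnd by blast
      have k1: "0 < k" "k < n" and ord: "\<forall>a<k. \<forall>b. k\<le>b \<longrightarrow> b<length xs \<longrightarrow> xs!b < xs!a"
        using k len unfolding msplit_def by auto
      have U: "set (drop k xs) \<union> set (take k xs) = {1..n}" using st td[of k] by (metis set_append Un_commute)
      have I: "set (drop k xs) \<inter> set (take k xs) = {}" using dis td[of k] by (metis distinct_append Int_commute)
      have C: "card (set (drop k xs)) = n - k" using dis k1 len by (simp add: distinct_card)
      have ord': "\<forall>a\<in>set (drop k xs). \<forall>b\<in>set (take k xs). a < b"
        using take_drop_rel[of k xs "\<lambda>x y. y < x"] ord by auto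
      have sA: "set (drop k xs) = {1..n-k}" and sB: "set (take k xs) = {n-k+1..n}"
        using low_set[OF U I ord' C] by auto
      have ptau: "drop k xs \<in> perms (n-k)" unfolding perms_def using sA dis len k1 by simp
      have atau: "no2413 (drop k xs)" "no3142 (drop k xs)"
        using av td[of k] no2413_suffix no3142_suffix by metis+
      have "\<exists>t. di_sk t \<and> size t = n - k - 1 \<and> P t = drop k xs"
        using less.IH[of "n-k", OF _ ptau atau] k1 by simp
      then obtain ttau where ttau: "di_sk ttau" "size ttau = n - k - 1" "P ttau = drop k xs" by blast
      have "set (take k xs) = {(n-k)+1..(n-k)+k}" using sB k1 by simp
      then obtain sg where sg: "sg \<in> perms k" "take k xs = map (\<lambda>x. x + (n-k)) sg"
        using shifted_perm[of "take k xs" "n-k" k] dis len k1 by auto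
      have asg: "no2413 sg" "no3142 sg"
        using av td[of k] no2413_prefix no3142_prefix sg(2) no2413_shift no3142_shift by metis+
      have "\<exists>t. di_sk t \<and> size t = k - 1 \<and> P t = sg"
        using less.IH[of k sg] sg(1) asg k1 by simp
      then obtain tsg where tsg: "di_sk tsg" "size tsg = k - 1" "P tsg = sg" by blast
      have nm: "case ttau of Leaf \<Rightarrow> True | Node _ b _ \<Rightarrow> b \<noteq> Minus"
      proof (cases ttau)
        case (Node l' b r')
        show ?thesis
        proof (cases b)
          case Minus
          have "msplit (drop k xs) (Suc (size l'))" using msplit_P[of l' r'] Node Minus ttau(3) by simp
          then have "msplit xs (k + Suc (size l'))" using msplit_combine k by blast
          then show ?thesis using kmax by fastforce
        qed (use Node in auto)
      qed auto
      have e: "Suc (size ttau) = n - k" using ttau k1 by simp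
      have "P (Node tsg Minus ttau) = map (\<lambda>x. x + (n-k)) sg @ drop k xs"
        using tsg(3) ttau(3) by (simp only: P.simps e)
      then have "P (Node tsg Minus ttau) = xs" using sg(2) td[of k] by simp
      moreover have "di_sk (Node tsg Minus ttau)" using tsg ttau nm by simp
      moreover have "size (Node tsg Minus ttau) = n - 1" using tsg ttau k1 by simp
      ultimately show ?thesis by blast
    qed
  qed
qed




lemma pv0[simp]: "pval xs 0 = \<infinity>" unfolding pval_def by simp
lemma pv_big: "i > length xs \<Longrightarrow> pval xs i = \<infinity>" unfolding pval_def by simp
lemma pv: "1 \<le> i \<Longrightarrow> i \<le> length xs \<Longrightarrow> pval xs i = enat (xs!(i-1))" unfolding pval_def by simp

lemma des_eq:
  assumes len: "length xs = n" and lw: "length w = n - 1"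
    and W: "\<And>i. i < n - 1 \<Longrightarrow> (xs!i > xs!Suc i) \<longleftrightarrow> w!i = Minus"
  shows "des xs = card {j. j < length w \<and> w!j = Minus}"
proof -
  let ?S = "{j. j < length w \<and> w!j = Minus}"
  have "{i \<in> {1..length xs}. pval xs i > pval xs (i + 1)} = Suc ` ?S"
  proof (rule set_eqI)
    fix i
    show "i \<in> {i \<in> {1..length xs}. pval xs i > pval xs (i + 1)} \<longleftrightarrow> i \<in> Suc ` ?S"
    proof (cases i)
      case 0 then show ?thesis by auto
    next
      case (Suc j)
      have "Suc j \<in> Suc ` ?S \<longleftrightarrow> j \<in> ?S" by auto
      moreover consider "Suc j = n" | "Suc j < n" | "Suc j > n" by linarith
      then have "Suc j \<in> {1..length xs} \<and> pval xs (Suc j) > pval xs (Suc j + 1) \<longleftrightarrow> j \<in> ?S"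
      proof cases
        case 1 then show ?thesis using len lw pv_big[of xs "Suc j + 1"] by auto
      next
        case 2
        then have "pval xs (Suc j) = enat (xs!j)" "pval xs (Suc j + 1) = enat (xs!Suc j)"
          using pv[of "Suc j" xs] pv[of "Suc j + 1" xs] len by auto
        then show ?thesis using 2 W[of j] len lw by auto
      next
        case 3 then show ?thesis using len lw by auto
      qed
      ultimately show ?thesis using Suc by simp
    qed
  qed
  then show ?thesis unfolding des_def by (simp add: card_image)
qed

lemma dd_eq:
  assumes len: "length xs = n" and lw: "length w = n - 1" and n1: "1 \<le> n"
    and W: "\<And>i. i < n - 1 \<Longrightarrow> (xs!i > xs!Suc i) \<longleftrightarrow> w!i = Minus"
  shows "dd xs = 0 \<longleftrightarrow> (\<forall>i. i + 1 < length w \<longrightarrow> \<not> (w!i = Minus \<and> w!(i+1) = Minus))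
                          \<and> (\<forall>x ys. w = x # ys \<longrightarrow> x = Plus)"
proof -
  let ?D = "{i \<in> {1..length xs}. pval xs (i - 1) > pval xs i \<and> pval xs i > pval xs (i + 1)}"
  have fin: "finite ?D" by simp
  have "?D = {} \<longleftrightarrow> (\<forall>i. i + 1 < length w \<longrightarrow> \<not> (w!i = Minus \<and> w!(i+1) = Minus))
                          \<and> (\<forall>x ys. w = x # ys \<longrightarrow> x = Plus)"
  proof
    assume E: "?D = {}"
    have A: "\<forall>i. i + 1 < length w \<longrightarrow> \<not> (w!i = Minus \<and> w!(i+1) = Minus)"
    proof (intro allI impI notI)
      fix i assume h: "i + 1 < length w" "w!i = Minus \<and> w!(i+1) = Minus"
      have "xs!i > xs!Suc i" "xs!Suc i > xs!Suc (Suc i)" using W[of i] W[of "Suc i"] h lw by auto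
      moreover have "pval xs (Suc (Suc i) - 1) = enat (xs!i)" "pval xs (Suc (Suc i)) = enat (xs!Suc i)"
        "pval xs (Suc (Suc i) + 1) = enat (xs!Suc (Suc i))"
        using pv[of "Suc (Suc i) - 1" xs] pv[of "Suc (Suc i)" xs] pv[of "Suc (Suc i) + 1" xs] h lw len by auto
      ultimately have "Suc (Suc i) \<in> ?D" using h lw len by auto
      then show False using E by blast
    qed
    have B: "\<forall>x ys. w = x # ys \<longrightarrow> x = Plus"
    proof (intro allI impI)
      fix x ys assume h: "w = x # ys"
      show "x = Plus"
      proof (rule ccontr)
        assume "x \<noteq> Plus" then have "x = Minus" by (cases x) auto
        then have "xs!0 > xs!1" using W[of 0] h lw by auto
        moreover have "pval xs 1 = enat (xs!0)" "pval xs (1 + 1) = enat (xs!1)"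
          using pv[of 1 xs] pv[of "1+1" xs] h lw len by auto
        ultimately have "1 \<in> ?D" using h lw len by auto
        then show False using E by blast
      qed
    qed
    show "(\<forall>i. i + 1 < length w \<longrightarrow> \<not> (w!i = Minus \<and> w!(i+1) = Minus)) \<and> (\<forall>x ys. w = x # ys \<longrightarrow> x = Plus)"
      using A B by simp
  next
    assume R: "(\<forall>i. i + 1 < length w \<longrightarrow> \<not> (w!i = Minus \<and> w!(i+1) = Minus)) \<and> (\<forall>x ys. w = x # ys \<longrightarrow> x = Plus)"
    show "?D = {}"
    proof (rule ccontr)
      assume "?D \<noteq> {}"
      then obtain i where i: "1 \<le> i" "i \<le> n" "pval xs (i - 1) > pval xs i" "pval xs i > pval xs (i + 1)"
        using len by auto
      have "i \<noteq> n"
      proof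
        assume "i = n"
        then have "pval xs (i+1) = \<infinity>" using pv_big[of xs "i+1"] len by simp
        then show False using i(4) by simp
      qed
      then have "i < n" using i by simp
      have p1: "pval xs i = enat (xs!(i-1))" "pval xs (i+1) = enat (xs!i)" using pv[of i xs] pv[of "i+1" xs] i \<open>i<n\<close> len by auto
      show False
      proof (cases "i = 1")
        case True
        then have "xs!0 > xs!1" using i(4) p1 by simp
        then have "w!0 = Minus" using W[of 0] \<open>i<n\<close> True by simp
        moreover have "w \<noteq> []" using lw \<open>i<n\<close> True by auto
        ultimately show False using R by (cases w) auto
      next
        case False
        then have "pval xs (i-1) = enat (xs!(i-2))" using pv[of "i-1" xs] i len by (auto simp: numeral_2_eq_2)
        then have "xs!(i-2) > xs!(i-1)" "xs!(i-1) > xs!i" using i(3,4) p1 by auto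
        moreover have "Suc (i-2) = i-1" "Suc (i-1) = i" using False i by auto
        ultimately have "w!(i-2) = Minus" "w!(i-2+1) = Minus" using W[of "i-2"] W[of "i-1"] \<open>i<n\<close> False
          by auto
        moreover have "i-2+1 < length w" using lw \<open>i<n\<close> False i by auto
        ultimately show False using R by blast
      qed
    qed
  qed
  then show ?thesis unfolding dd_def using fin by simp
qed




lemma avoiding_alt: "avoiding n = {xs \<in> perms n. no2413 xs \<and> no3142 xs}"
  unfolding avoiding_def using contains_2413 contains_3142 by auto

lemma P_bij: assumes "n \<ge> 1" shows "bij_betw P (DT n) (avoiding n)"
proof -
  have "inj_on P (DT n)" unfolding inj_on_def DT_def using P_inj by blast
  moreover have "P ` DT n = avoiding n"
  proof
    show "P ` DT n \<subseteq> avoiding n"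
    proof
      fix x assume "x \<in> P ` DT n"
      then obtain t where t: "t \<in> DT n" "x = P t" by blast
      then have "Suc (size t) = n" using assms unfolding DT_def by auto
      then show "x \<in> avoiding n" unfolding avoiding_alt using t P_perms[of t] P_avoid[of t] by auto
    qed
    show "avoiding n \<subseteq> P ` DT n"
    proof
      fix x assume "x \<in> avoiding n"
      then obtain t where "di_sk t" "size t = n - 1" "P t = x"
        using P_surj[of x n] assms unfolding avoiding_alt by auto
      then show "x \<in> P ` DT n" unfolding DT_def by auto
    qed
  qed
  ultimately show ?thesis unfolding bij_betw_def by blast
qed

theorem theorem2p15:
  fixes n :: nat
  assumes "n \<ge> 1"
  shows "\<exists>T :: nat list \<Rightarrow> sign tree.
     bij_betw T (avoiding n) (DT n)
   \<and> (\<forall>\<pi>\<in>avoiding n. \<forall>i\<in>{1..n-1}.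
        (\<pi> ! (i - 1) > \<pi> ! i) \<longleftrightarrow> inorder (T \<pi>) ! (i - 1) = Minus)
   \<and> (\<forall>k. k \<le> (n - 1) div 2 \<longrightarrow> bij_betw T (SS n k) (DT2 n k))"
proof -
  let ?T = "inv_into (DT n) P"
  have B: "bij_betw P (DT n) (avoiding n)" using P_bij assms by simp
  have BT: "bij_betw ?T (avoiding n) (DT n)" using bij_betw_inv_into[OF B] .
  have TD: "\<And>x. x \<in> avoiding n \<Longrightarrow> ?T x \<in> DT n" using BT bij_betwE by blast
  have PT: "\<And>x. x \<in> avoiding n \<Longrightarrow> P (?T x) = x"
    using B by (simp add: bij_betw_def f_inv_into_f)
  have W: "\<And>x i. x \<in> avoiding n \<Longrightarrow> i < n - 1 \<Longrightarrow> (x!i > x!Suc i) \<longleftrightarrow> inorder (?T x) ! i = Minus"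
  proof -
    fix x i assume x: "x \<in> avoiding n" and i: "i < n - 1"
    have "size (?T x) = n - 1" using TD[OF x] unfolding DT_def by auto
    then show "(x!i > x!Suc i) \<longleftrightarrow> inorder (?T x) ! i = Minus"
      using P_desc[of i "?T x"] PT[OF x] i by simp
  qed
  have D: "\<forall>\<pi>\<in>avoiding n. \<forall>i\<in>{1..n-1}. (\<pi> ! (i - 1) > \<pi> ! i) \<longleftrightarrow> inorder (?T \<pi>) ! (i - 1) = Minus"
  proof (intro ballI)
    fix x i assume x: "x \<in> avoiding n" and i: "i \<in> {1..n-1}"
    then have "i - 1 < n - 1" "Suc (i - 1) = i" by auto
    then show "(x ! (i - 1) > x ! i) \<longleftrightarrow> inorder (?T x) ! (i - 1) = Minus" using W[OF x, of "i-1"] by simp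
  qed
  have key: "\<And>x k. x \<in> avoiding n \<Longrightarrow> x \<in> SS n k \<longleftrightarrow> ?T x \<in> DT2 n k"
  proof -
    fix x k assume x: "x \<in> avoiding n"
    have len: "length x = n" using x unfolding avoiding_def perms_def by auto
    have lw: "length (inorder (?T x)) = n - 1" using TD[OF x] unfolding DT_def by auto
    have de: "des x = n_minus (?T x)"
      using des_eq[OF len lw W[OF x]] unfolding n_minus_def by (simp add: length_filter_conv_card)
    have dde: "dd x = 0 \<longleftrightarrow> (\<forall>i. i + 1 < length (inorder (?T x)) \<longrightarrow> \<not> (inorder (?T x)!i = Minus \<and> inorder (?T x)!(i+1) = Minus))
                          \<and> (\<forall>y ys. inorder (?T x) = y # ys \<longrightarrow> y = Plus)"
      using dd_eq[OF len lw assms W[OF x]] .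
    show "x \<in> SS n k \<longleftrightarrow> ?T x \<in> DT2 n k"
      unfolding SS_def DT2_def using x TD[OF x] de dde by auto
  qed
  have S: "\<forall>k. k \<le> (n - 1) div 2 \<longrightarrow> bij_betw ?T (SS n k) (DT2 n k)"
  proof (intro allI impI)
    fix k
    have sub: "SS n k \<subseteq> avoiding n" unfolding SS_def by auto
    have "?T ` SS n k = DT2 n k"
    proof
      show "?T ` SS n k \<subseteq> DT2 n k" using key sub by auto
      show "DT2 n k \<subseteq> ?T ` SS n k"
      proof
        fix t assume t: "t \<in> DT2 n k"
        then have "t \<in> DT n" unfolding DT2_def by auto
        then obtain x where x: "x \<in> avoiding n" "t = ?T x"
          using BT unfolding bij_betw_def by auto
        then have "x \<in> SS n k" using key t by auto
        then show "t \<in> ?T ` SS n k" using x by auto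
      qed
    qed
    then show "bij_betw ?T (SS n k) (DT2 n k)" using bij_betw_subset[OF BT sub] by simp
  qed
  show ?thesis using BT D S by blast
qed


end
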